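(* Let $X$ be a Tychonoff space with $|X|>1$ and let $I\neq J$ be vertices of $\mathbb{AG}(X)$. Then: (a) $d(I,J)=1$ iff $\mathcal{O}(I)\cap\mathcal{O}(J)=\emptyset$; (b) $d(I,J)=2$ iff $\mathcal{O}(I)\cap\mathcal{O}(J)\neq\emptyset$ and $\overline{\mathcal{O}(I)\cup\mathcal{O}(J)}\neq X$; (c) $d(I,J)=3$ iff $\mathcal{O}(I)\cap\mathcal{O}(J)\neq\emptyset$ and $\overline{\mathcal{O}(I)\cup\mathcal{O}(J)}=X$.
   Context: $C(X)$ denotes the ring of all real-valued continuous functions on $X$; $\mathrm{Coz}(f)=\{x: f(x)\neq 0\}$; for $S\subseteq C(X)$, $\mathcal{O}(S)=\bigcup_{f\in S}\mathrm{Coz}(f)$. $\mathbb{A}(X)$ is the set of nonzero ideals $I$ of $C(X)$ for which there is a nonzero ideal $J$ with $IJ=\{0\}$. The annihilating-ideal graph $\mathbb{AG}(X)$ has vertex set $\mathbb{A}(X)$, distinct vertices $I,J$ being adjacent iff $IJ=\{0\}$. $d(I,J)$ is the length of a shortest path between $I$ and $J$. *)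

theory Defs
  imports "HOL-Analysis.Analysis" "HOL-Library.Extended_Nat"
begin

definition tychonoff_space :: "'a topology \<Rightarrow> bool" where
  "tychonoff_space X \<longleftrightarrow> completely_regular_space X \<and> t1_space X"

text \<open>The ring C(X) of real-valued continuous functions on X. Functions are
  represented canonically by requiring them to vanish outside the topspace.\<close>
definition CX :: "'a topology \<Rightarrow> ('a \<Rightarrow> real) set" where
  "CX X = {f. continuous_map X euclideanreal f \<and> (\<forall>x. x \<notin> topspace X \<longrightarrow> f x = 0)}"

definition is_ideal :: "'a topology \<Rightarrow> ('a \<Rightarrow> real) set \<Rightarrow> bool" where
  "is_ideal X I \<longleftrightarrow> I \<subseteq> CX X \<and> (\<lambda>x. 0) \<in> I \<and>
     (\<forall>f\<in>I. \<forall>g\<in>I. (\<lambda>x. f x + g x) \<in> I) \<and>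
     (\<forall>f\<in>I. (\<lambda>x. - f x) \<in> I) \<and>
     (\<forall>f\<in>I. \<forall>h\<in>CX X. (\<lambda>x. h x * f x) \<in> I)"

definition ideal_prod :: "('a \<Rightarrow> real) set \<Rightarrow> ('a \<Rightarrow> real) set \<Rightarrow> ('a \<Rightarrow> real) set" where
  "ideal_prod I J = {(\<lambda>x. \<Sum>i<n. f i x * g i x) | (n::nat) f g. \<forall>i<n. f i \<in> I \<and> g i \<in> J}"

definition zero_ideal :: "('a \<Rightarrow> real) set" where
  "zero_ideal = {\<lambda>x. 0}"

definition AX :: "'a topology \<Rightarrow> ('a \<Rightarrow> real) set set" where
  "AX X = {I. is_ideal X I \<and> I \<noteq> zero_ideal \<and>
              (\<exists>J. is_ideal X J \<and> J \<noteq> zero_ideal \<and> ideal_prod I J = zero_ideal)}"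

definition AG_adj :: "'a topology \<Rightarrow> ('a \<Rightarrow> real) set \<Rightarrow> ('a \<Rightarrow> real) set \<Rightarrow> bool" where
  "AG_adj X I J \<longleftrightarrow> I \<in> AX X \<and> J \<in> AX X \<and> I \<noteq> J \<and> ideal_prod I J = zero_ideal"

definition AG_walk :: "'a topology \<Rightarrow> ('a \<Rightarrow> real) set \<Rightarrow> ('a \<Rightarrow> real) set \<Rightarrow> nat \<Rightarrow> bool" where
  "AG_walk X I J n \<longleftrightarrow> (\<exists>p :: nat \<Rightarrow> ('a \<Rightarrow> real) set.
      p 0 = I \<and> p n = J \<and> (\<forall>i\<le>n. p i \<in> AX X) \<and> (\<forall>i<n. AG_adj X (p i) (p (Suc i))))"

definition AG_dist :: "'a topology \<Rightarrow> ('a \<Rightarrow> real) set \<Rightarrow> ('a \<Rightarrow> real) set \<Rightarrow> enat" where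
  "AG_dist X I J = (INF n \<in> {n. AG_walk X I J n}. enat n)"

definition Coz :: "'a topology \<Rightarrow> ('a \<Rightarrow> real) \<Rightarrow> 'a set" where
  "Coz X f = {x \<in> topspace X. f x \<noteq> 0}"

definition OS :: "'a topology \<Rightarrow> ('a \<Rightarrow> real) set \<Rightarrow> 'a set" where
  "OS X S = (\<Union>f\<in>S. Coz X f)"

end

theory Submission
  imports Defs
begin

lemma CX_add: "f \<in> CX X \<Longrightarrow> g \<in> CX X \<Longrightarrow> (\<lambda>x. f x + g x) \<in> CX X"
  unfolding CX_def by (auto intro: continuous_intros)

lemma CX_neg: "f \<in> CX X \<Longrightarrow> (\<lambda>x. - f x) \<in> CX X"
  unfolding CX_def by (auto intro: continuous_intros)

lemma CX_mult: "f \<in> CX X \<Longrightarrow> g \<in> CX X \<Longrightarrow> (\<lambda>x. f x * g x) \<in> CX X"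
  unfolding CX_def by (auto intro: continuous_intros)

lemma CX_zero: "(\<lambda>x. 0) \<in> CX X"
  unfolding CX_def by auto

definition Ann :: "'a topology \<Rightarrow> 'a set \<Rightarrow> ('a \<Rightarrow> real) set" where
  "Ann X S = {f \<in> CX X. Coz X f \<inter> S = {}}"

lemma Coz_add: "Coz X (\<lambda>x. f x + g x) \<subseteq> Coz X f \<union> Coz X g"
  unfolding Coz_def by auto

lemma Coz_neg: "Coz X (\<lambda>x. - f x) = Coz X f"
  unfolding Coz_def by auto

lemma Coz_mult: "Coz X (\<lambda>x. h x * f x) \<subseteq> Coz X f"
  unfolding Coz_def by auto

lemma Ann_ideal: "is_ideal X (Ann X S)"
proof -
  have a: "\<forall>f\<in>Ann X S. \<forall>g\<in>Ann X S. (\<lambda>x. f x + g x) \<in> Ann X S"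
  proof (intro ballI)
    fix f g assume "f \<in> Ann X S" "g \<in> Ann X S"
    then have "f \<in> CX X" "g \<in> CX X" "Coz X f \<inter> S = {}" "Coz X g \<inter> S = {}"
      unfolding Ann_def by auto
    moreover have "Coz X (\<lambda>x. f x + g x) \<subseteq> Coz X f \<union> Coz X g" by (rule Coz_add)
    ultimately show "(\<lambda>x. f x + g x) \<in> Ann X S"
      unfolding Ann_def using CX_add[of f X g] by auto
  qed
  have b: "\<forall>f\<in>Ann X S. (\<lambda>x. - f x) \<in> Ann X S"
  proof
    fix f assume "f \<in> Ann X S"
    then have "f \<in> CX X" "Coz X f \<inter> S = {}" unfolding Ann_def by auto
    then show "(\<lambda>x. - f x) \<in> Ann X S"
      unfolding Ann_def using CX_neg[of f X] Coz_neg[of X f] by simp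
  qed
  have c: "\<forall>f\<in>Ann X S. \<forall>h\<in>CX X. (\<lambda>x. h x * f x) \<in> Ann X S"
  proof (intro ballI)
    fix f h assume "f \<in> Ann X S" "h \<in> CX X"
    then have "f \<in> CX X" "Coz X f \<inter> S = {}" unfolding Ann_def by auto
    moreover have "Coz X (\<lambda>x. h x * f x) \<subseteq> Coz X f" by (rule Coz_mult)
    ultimately show "(\<lambda>x. h x * f x) \<in> Ann X S"
      unfolding Ann_def using CX_mult[of h X f] \<open>h \<in> CX X\<close> by auto
  qed
  have d: "(\<lambda>x. 0) \<in> Ann X S" "Ann X S \<subseteq> CX X"
    unfolding Ann_def Coz_def using CX_zero by auto
  show ?thesis unfolding is_ideal_def using a b c d by blast
qed

lemma OS_Ann: "OS X (Ann X S) \<inter> S = {}"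
  unfolding OS_def Ann_def by auto

lemma prod_zero_iff:
  assumes "is_ideal X I" "is_ideal X J"
  shows "ideal_prod I J = zero_ideal \<longleftrightarrow> OS X I \<inter> OS X J = {}"
proof
  assume h: "ideal_prod I J = zero_ideal"
  show "OS X I \<inter> OS X J = {}"
  proof (rule ccontr)
    assume "OS X I \<inter> OS X J \<noteq> {}"
    then obtain x f g where x: "f \<in> I" "g \<in> J" "f x \<noteq> 0" "g x \<noteq> 0"
      unfolding OS_def Coz_def by auto
    have "\<exists>n F G. (\<lambda>x. f x * g x) = (\<lambda>x. \<Sum>i<(n::nat). F i x * G i x) \<and> (\<forall>i<n. F i \<in> I \<and> G i \<in> J)"
      by (rule exI[of _ 1], rule exI[of _ "\<lambda>i. f"], rule exI[of _ "\<lambda>i. g"]) (use x in auto)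
    then have "(\<lambda>x. f x * g x) \<in> ideal_prod I J"
      unfolding ideal_prod_def by blast
    then have "(\<lambda>x. f x * g x) \<in> zero_ideal" using h by simp
    then have "f x * g x = 0" unfolding zero_ideal_def by (metis singletonD)
    with x show False by simp
  qed
next
  assume h: "OS X I \<inter> OS X J = {}"
  have z: "f x * g x = 0" if "f \<in> I" "g \<in> J" for f g x
  proof (cases "x \<in> topspace X")
    case True
    then show ?thesis using h that unfolding OS_def Coz_def by auto
  next
    case False
    then show ?thesis using that assms unfolding is_ideal_def CX_def by auto
  qed
  show "ideal_prod I J = zero_ideal"
  proof
    have z': "(\<Sum>i<n. F i x * G i x) = 0" if "\<forall>i<n. F i \<in> I \<and> G i \<in> J" for F G n x
      by (rule sum.neutral) (use z that in auto)
    show "ideal_prod I J \<subseteq> zero_ideal"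
      unfolding ideal_prod_def zero_ideal_def using z' by (auto intro!: ext)
    have "\<exists>n F G. (\<lambda>x::'a. 0::real) = (\<lambda>x. \<Sum>i<(n::nat). F i x * G i x) \<and> (\<forall>i<n. F i \<in> I \<and> G i \<in> J)"
      by (rule exI[of _ 0]) auto
    then have "(\<lambda>x. 0) \<in> ideal_prod I J" unfolding ideal_prod_def by blast
    then show "zero_ideal \<subseteq> ideal_prod I J" unfolding zero_ideal_def by simp
  qed
qed

lemma OS_nonempty:
  assumes "is_ideal X I" "I \<noteq> zero_ideal" shows "OS X I \<noteq> {}"
proof -
  have "(\<lambda>x. 0) \<in> I" using assms(1) unfolding is_ideal_def by simp
  then have "\<exists>f\<in>I. f \<noteq> (\<lambda>x. 0)" using assms(2) unfolding zero_ideal_def by auto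
  then obtain f where f: "f \<in> I" "f \<noteq> (\<lambda>x. 0)" by blast
  then obtain x where "f x \<noteq> 0" by auto
  moreover have "f \<in> CX X" using f assms unfolding is_ideal_def by auto
  ultimately have "x \<in> Coz X f" unfolding CX_def Coz_def by auto
  then show ?thesis using f unfolding OS_def by auto
qed

lemma OS_open:
  assumes "is_ideal X I" shows "openin X (OS X I)"
proof -
  have "openin X (Coz X f)" if "f \<in> I" for f
  proof -
    have "continuous_map X euclideanreal f" using that assms unfolding is_ideal_def CX_def by auto
    then have "openin X {x \<in> topspace X. f x \<in> - {0}}"
      by (rule openin_continuous_map_preimage) auto
    then show ?thesis unfolding Coz_def by simp
  qed
  then show ?thesis unfolding OS_def by auto
qed

lemma OS_sub: "OS X I \<subseteq> topspace X"
  unfolding OS_def Coz_def by auto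

lemma Ann_nonzero:
  assumes "completely_regular_space X" "X closure_of S \<noteq> topspace X"
  shows "Ann X S \<noteq> zero_ideal"
proof -
  obtain x where x: "x \<in> topspace X" "x \<notin> X closure_of S"
  proof -
    have "X closure_of S \<subseteq> topspace X" by (rule closure_of_subset_topspace)
    then have "\<exists>x. x \<in> topspace X \<and> x \<notin> X closure_of S" using assms(2) by auto
    then show ?thesis using that by blast
  qed
  obtain f :: "'a \<Rightarrow> real" where f: "continuous_map X (top_of_set {0..1}) f" "f x = 0"
      "f ` (X closure_of S) \<subseteq> {1}"
  proof -
    have "closedin X (X closure_of S) \<and> x \<in> topspace X - X closure_of S" using x by simp
    from assms(1)[unfolded completely_regular_space_def, rule_format, OF this]
    show ?thesis using that by blast
  qed
  define g where "g = (\<lambda>y. if y \<in> topspace X then 1 - f y else 0)"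
  have c: "continuous_map X euclideanreal (\<lambda>y. 1 - f y)"
    using f(1) by (auto intro: continuous_intros simp: continuous_map_in_subtopology)
  have "continuous_map X euclideanreal g"
    by (rule continuous_map_eq[OF c]) (simp add: g_def)
  then have "g \<in> CX X" unfolding CX_def g_def by auto
  moreover have "Coz X g \<inter> S = {}"
  proof -
    have "g y = 0" if "y \<in> S" "y \<in> topspace X" for y
    proof -
      have "y \<in> X closure_of S" using that closure_of_subset_Int[of X S] by auto
      then have "f y = 1" using f(3) by auto
      then show ?thesis using that unfolding g_def by simp
    qed
    then show ?thesis unfolding Coz_def by auto
  qed
  ultimately have "g \<in> Ann X S" unfolding Ann_def by auto
  moreover have "g x \<noteq> 0" using x f unfolding g_def by simp
  ultimately show ?thesis unfolding zero_ideal_def by auto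
qed

lemma dist_eq:
  assumes "AG_walk X I J n" "\<And>m. m < n \<Longrightarrow> \<not> AG_walk X I J m"
  shows "AG_dist X I J = enat n"
  unfolding AG_dist_def
proof (rule antisym)
  show "(INF n\<in>{n. AG_walk X I J n}. enat n) \<le> enat n"
    using assms(1) by (intro INF_lower2) auto
  show "enat n \<le> (INF n\<in>{n. AG_walk X I J n}. enat n)"
    using assms(2) by (intro INF_greatest) (auto simp: not_less[symmetric])
qed

lemma walk0: "AG_walk X I J 0 \<Longrightarrow> I = J"
  unfolding AG_walk_def by auto

lemma walk1: "AG_walk X I J 1 \<longleftrightarrow> AG_adj X I J"
  unfolding AG_walk_def AG_adj_def
proof
  assume "\<exists>p. p 0 = I \<and> p 1 = J \<and> (\<forall>i\<le>1. p i \<in> AX X) \<and>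
     (\<forall>i<1. p i \<in> AX X \<and> p (Suc i) \<in> AX X \<and> p i \<noteq> p (Suc i) \<and> ideal_prod (p i) (p (Suc i)) = zero_ideal)"
  then obtain p where "p 0 = I \<and> p 1 = J \<and> (\<forall>i\<le>1. p i \<in> AX X) \<and>
     (\<forall>i<1. p i \<in> AX X \<and> p (Suc i) \<in> AX X \<and> p i \<noteq> p (Suc i) \<and> ideal_prod (p i) (p (Suc i)) = zero_ideal)" by blast
  then show "I \<in> AX X \<and> J \<in> AX X \<and> I \<noteq> J \<and> ideal_prod I J = zero_ideal"
    by (metis One_nat_def less_one)
next
  assume h: "I \<in> AX X \<and> J \<in> AX X \<and> I \<noteq> J \<and> ideal_prod I J = zero_ideal"
  show "\<exists>p. p 0 = I \<and> p 1 = J \<and> (\<forall>i\<le>1. p i \<in> AX X) \<and>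
     (\<forall>i<1. p i \<in> AX X \<and> p (Suc i) \<in> AX X \<and> p i \<noteq> p (Suc i) \<and> ideal_prod (p i) (p (Suc i)) = zero_ideal)"
    by (rule exI[of _ "\<lambda>i. if i = 0 then I else J"]) (use h in \<open>auto simp: le_Suc_eq\<close>)
qed

lemma walk2: "AG_walk X I J 2 \<Longrightarrow> \<exists>K. AG_adj X I K \<and> AG_adj X K J"
  unfolding AG_walk_def
proof -
  assume "\<exists>p. p 0 = I \<and> p 2 = J \<and> (\<forall>i\<le>2. p i \<in> AX X) \<and> (\<forall>i<2. AG_adj X (p i) (p (Suc i)))"
  then obtain p where p: "p 0 = I" "p 2 = J" "\<forall>i<2. AG_adj X (p i) (p (Suc i))" by blast
  have "AG_adj X (p 0) (p 1)" "AG_adj X (p 1) (p 2)" using p(3) by (auto simp: numeral_2_eq_2)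
  then show ?thesis using p by auto
qed

lemma walk3: "AG_adj X I K1 \<Longrightarrow> AG_adj X K1 K2 \<Longrightarrow> AG_adj X K2 J \<Longrightarrow> AG_walk X I J 3"
  unfolding AG_walk_def
  apply (rule exI[of _ "\<lambda>i. if i = 0 then I else if i = 1 then K1 else if i = 2 then K2 else J"])
  apply (auto simp: AG_adj_def)
  done

lemma AX_ideal: "I \<in> AX X \<Longrightarrow> is_ideal X I \<and> I \<noteq> zero_ideal"
  unfolding AX_def by auto

lemma adjOS: assumes "AG_adj X A B" shows "OS X A \<inter> OS X B = {}"
proof -
  have "A \<in> AX X" "B \<in> AX X" "ideal_prod A B = zero_ideal" using assms unfolding AG_adj_def by auto
  moreover have "is_ideal X A" "is_ideal X B" using AX_ideal calculation(1,2) by auto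
  ultimately show ?thesis using prod_zero_iff[of X A B] by simp
qed

lemma adjAX: assumes "A \<in> AX X" "B \<in> AX X" "OS X A \<inter> OS X B = {}" shows "AG_adj X A B"
proof -
  have iA: "is_ideal X A" "A \<noteq> zero_ideal" using AX_ideal[OF assms(1)] by auto
  have iB: "is_ideal X B" using AX_ideal[OF assms(2)] by auto
  have "OS X A \<noteq> {}" using OS_nonempty[OF iA] .
  then have "A \<noteq> B" using assms(3) by auto
  moreover have "ideal_prod A B = zero_ideal" using prod_zero_iff[OF iA(1) iB] assms(3) by simp
  ultimately show ?thesis using assms unfolding AG_adj_def by simp
qed

lemma AnnAX: assumes cr: "completely_regular_space X" and "A \<in> AX X" "X closure_of (OS X A) \<noteq> topspace X"
  shows "Ann X (OS X A) \<in> AX X"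
proof -
  have iA: "is_ideal X A" "A \<noteq> zero_ideal" using AX_ideal[OF assms(2)] by auto
  have iK: "is_ideal X (Ann X (OS X A))" by (rule Ann_ideal)
  have "OS X (Ann X (OS X A)) \<inter> OS X A = {}" by (rule OS_Ann)
  then have "ideal_prod (Ann X (OS X A)) A = zero_ideal"
    using prod_zero_iff[OF iK iA(1)] by simp
  moreover have "Ann X (OS X A) \<noteq> zero_ideal" by (rule Ann_nonzero[OF cr assms(3)])
  ultimately show ?thesis unfolding AX_def using iK iA by auto
qed

lemma closAX: assumes "A \<in> AX X" shows "X closure_of (OS X A) \<noteq> topspace X"
proof
  assume c: "X closure_of OS X A = topspace X"
  have iA: "is_ideal X A" using AX_ideal[OF assms] by auto
  obtain B where B: "is_ideal X B" "B \<noteq> zero_ideal" "ideal_prod A B = zero_ideal"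
    using assms unfolding AX_def by auto
  have "OS X A \<inter> OS X B = {}" using prod_zero_iff[OF iA B(1)] B(3) by simp
  then have "OS X B \<inter> OS X A = {}" by auto
  then have "OS X B \<inter> X closure_of OS X A = {}"
    using openin_Int_closure_of_eq_empty[OF OS_open[OF B(1)]] by simp
  then have "OS X B = {}" using c OS_sub[of X B] by auto
  then show False using OS_nonempty[OF B(1,2)] by simp
qed

lemma caseA:
  assumes "I \<in> AX X" "J \<in> AX X" "I \<noteq> J" "OS X I \<inter> OS X J = {}"
  shows "AG_dist X I J = 1"
proof -
  have "AG_adj X I J" by (rule adjAX[OF assms(1,2,4)])
  then have "AG_walk X I J 1" by (simp only: walk1)
  moreover have "\<not> AG_walk X I J 0" using walk0 assms(3) by auto
  ultimately have "AG_dist X I J = enat 1" by (intro dist_eq) auto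
  then show ?thesis by (simp add: one_enat_def)
qed

lemma caseB:
  assumes cr: "completely_regular_space X" and "I \<in> AX X" "J \<in> AX X" "I \<noteq> J"
    "OS X I \<inter> OS X J \<noteq> {}" "X closure_of (OS X I \<union> OS X J) \<noteq> topspace X"
  shows "AG_dist X I J = 2"
proof -
  define K where "K = Ann X (OS X I \<union> OS X J)"
  have iI: "is_ideal X I" using AX_ideal[OF assms(2)] by auto
  have ideal: "is_ideal X K" unfolding K_def by (rule Ann_ideal)
  have nz: "K \<noteq> zero_ideal" unfolding K_def by (rule Ann_nonzero[OF cr assms(6)])
  have d: "OS X K \<inter> (OS X I \<union> OS X J) = {}" unfolding K_def by (rule OS_Ann)
  have "ideal_prod K I = zero_ideal"
    using prod_zero_iff[OF ideal iI] d by auto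
  then have KA: "K \<in> AX X" unfolding AX_def using ideal nz iI AX_ideal[OF assms(2)] by auto
  have a1: "AG_adj X I K" using adjAX[OF assms(2) KA] d by auto
  have a2: "AG_adj X K J" using adjAX[OF KA assms(3)] d by auto
  have w2: "AG_walk X I J 2"
    unfolding AG_walk_def
    apply (rule exI[of _ "\<lambda>i. if i = 0 then I else if i = 1 then K else J"])
    using assms(2,3) KA a1 a2 by (auto simp: numeral_2_eq_2 le_Suc_eq less_Suc_eq)
  have "AG_dist X I J = enat 2"
  proof (rule dist_eq[OF w2])
    fix m :: nat assume "m < 2"
    then have "m = 0 \<or> m = 1" by auto
    moreover have "\<not> AG_walk X I J 0" using walk0 assms(4) by auto
    moreover have "\<not> AG_walk X I J 1" using walk1 adjOS assms(5) by blast
    ultimately show "\<not> AG_walk X I J m" by auto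
  qed
  then show ?thesis by (simp add: numeral_eq_enat)
qed

lemma caseC:
  assumes cr: "completely_regular_space X" and "I \<in> AX X" "J \<in> AX X" "I \<noteq> J"
    "OS X I \<inter> OS X J \<noteq> {}" "X closure_of (OS X I \<union> OS X J) = topspace X"
  shows "AG_dist X I J = 3"
proof -
  have n2: "\<not> AG_walk X I J 2"
  proof
    assume "AG_walk X I J 2"
    then obtain K where K: "AG_adj X I K" "AG_adj X K J" using walk2 by blast
    then have KA: "K \<in> AX X" unfolding AG_adj_def by auto
    have iK: "is_ideal X K" "K \<noteq> zero_ideal" using AX_ideal[OF KA] by auto
    have "OS X K \<inter> (OS X I \<union> OS X J) = {}" using adjOS[OF K(1)] adjOS[OF K(2)] by auto
    then have "OS X K \<inter> X closure_of (OS X I \<union> OS X J) = {}"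
      by (rule openin_Int_closure_of_eq_empty[OF OS_open[OF iK(1)], THEN iffD2])
    then have "OS X K = {}" using assms(6) OS_sub[of X K] by auto
    then show False using OS_nonempty[OF iK] by simp
  qed
  define K1 where "K1 = Ann X (OS X I)"
  define K2 where "K2 = Ann X (OS X J)"
  have K1: "K1 \<in> AX X" unfolding K1_def by (rule AnnAX[OF cr assms(2) closAX[OF assms(2)]])
  have K2: "K2 \<in> AX X" unfolding K2_def by (rule AnnAX[OF cr assms(3) closAX[OF assms(3)]])
  have d1: "OS X I \<inter> OS X K1 = {}" using OS_Ann[of X "OS X I"] unfolding K1_def by auto
  have d2: "OS X K2 \<inter> OS X J = {}" using OS_Ann[of X "OS X J"] unfolding K2_def by auto
  have d12: "OS X K1 \<inter> OS X K2 = {}"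
  proof -
    have o1: "openin X (OS X K1)" using OS_open AX_ideal[OF K1] by auto
    have o2: "openin X (OS X K2)" using OS_open AX_ideal[OF K2] by auto
    have o: "openin X (OS X K1 \<inter> OS X K2)" using openin_Int[OF o1 o2] .
    have "(OS X K1 \<inter> OS X K2) \<inter> (OS X I \<union> OS X J) = {}" using d1 d2 by auto
    then have "(OS X K1 \<inter> OS X K2) \<inter> X closure_of (OS X I \<union> OS X J) = {}"
      by (rule openin_Int_closure_of_eq_empty[OF o, THEN iffD2])
    then show ?thesis using assms(6) OS_sub[of X K1] by auto
  qed
  have w3: "AG_walk X I J 3"
    by (rule walk3[of X I K1 K2 J]) (use adjAX assms(2,3) K1 K2 d1 d2 d12 in auto)
  have "AG_dist X I J = enat 3"
  proof (rule dist_eq[OF w3])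
    fix m :: nat assume "m < 3"
    then have "m = 0 \<or> m = 1 \<or> m = 2" by auto
    moreover have "\<not> AG_walk X I J 0" using walk0 assms(4) by auto
    moreover have "\<not> AG_walk X I J 1" using walk1 adjOS assms(5) by blast
    ultimately show "\<not> AG_walk X I J m" using n2 by auto
  qed
  then show ?thesis by (simp add: numeral_eq_enat)
qed

theorem mainTheorem9:
  fixes X :: "'a topology" and I J :: "('a \<Rightarrow> real) set"
  assumes "tychonoff_space X"
    and "\<exists>x\<in>topspace X. \<exists>y\<in>topspace X. x \<noteq> y"
    and "I \<in> AX X" and "J \<in> AX X" and "I \<noteq> J"
  shows "(AG_dist X I J = 1 \<longleftrightarrow> OS X I \<inter> OS X J = {})
       \<and> (AG_dist X I J = 2 \<longleftrightarrow> OS X I \<inter> OS X J \<noteq> {} \<and> X closure_of (OS X I \<union> OS X J) \<noteq> topspace X)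
       \<and> (AG_dist X I J = 3 \<longleftrightarrow> OS X I \<inter> OS X J \<noteq> {} \<and> X closure_of (OS X I \<union> OS X J) = topspace X)"
proof -
  have cr: "completely_regular_space X" using assms(1) unfolding tychonoff_space_def by auto
  consider (a) "OS X I \<inter> OS X J = {}"
    | (b) "OS X I \<inter> OS X J \<noteq> {}" "X closure_of (OS X I \<union> OS X J) \<noteq> topspace X"
    | (c) "OS X I \<inter> OS X J \<noteq> {}" "X closure_of (OS X I \<union> OS X J) = topspace X" by auto
  then show ?thesis
  proof cases
    case a
    then have "AG_dist X I J = 1" using caseA assms(3-5) by blast
    then show ?thesis using a by simp
  next
    case b
    then have "AG_dist X I J = 2" using caseB[OF cr assms(3-5)] by blast
    then show ?thesis using b by simp
  next
    case c
    then have "AG_dist X I J = 3" using caseC[OF cr assms(3-5)] by blast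
    then show ?thesis using c by simp
  qed
qed

end
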